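(* Let $p$ be a prime, $q$ a power of $p$, and $F$ a field of characteristic $p$ containing $\mathbb{F}_q$. Let $L\in F[x]$ be a monic $q$-polynomial of $q$-degree $n\ge1$ whose coefficient of $x$ is nonzero, let $E$ be its splitting field over $F$, and let $G=\mathrm{Gal}(E/F)$, regarded as a subgroup of $GL(n,q)$ via its linear action on the $\mathbb{F}_q$-space $V$ of roots of $L$. Let $\alpha_1,\dots,\alpha_n$ be an $\mathbb{F}_q$-basis of $V$ and $\delta=\det\big(\alpha_i^{q^{j-1}}\big)_{1\le i,j\le n}$. Then $G\le SL(n,q)$ if and only if $\delta\in F$.
   Context: A $q$-polynomial over $F$ is a polynomial $\sum_{i=0}^n a_i x^{q^i}\in F[x]$; with $a_n\ne0$ its $q$-degree is $n$. When the coefficient of $x$ is nonzero the roots of $L$ in $E$ are distinct and form an $n$-dimensional $\mathbb{F}_q$-vector space $V$ on which $G$ acts $\mathbb{F}_q$-linearly. *)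

theory Defs
  imports "HOL-Computational_Algebra.Polynomial" "Jordan_Normal_Form.Determinant"
begin

text \<open>A subfield of the ambient field 'e (the ambient field plays the role of E).\<close>
definition is_subfield :: "'e::field set \<Rightarrow> bool" where
  "is_subfield K \<longleftrightarrow> 0 \<in> K \<and> 1 \<in> K \<and>
     (\<forall>x\<in>K. \<forall>y\<in>K. x + y \<in> K \<and> x * y \<in> K) \<and>
     (\<forall>x\<in>K. - x \<in> K \<and> inverse x \<in> K)"

definition q_poly :: "nat \<Rightarrow> nat \<Rightarrow> (nat \<Rightarrow> 'e::field) \<Rightarrow> 'e poly" where
  "q_poly q n a = (\<Sum>i\<le>n. monom (a i) (q ^ i))"

definition splits :: "'e::field poly \<Rightarrow> bool" where
  "splits P \<longleftrightarrow> (\<exists>rs. P = smult (lead_coeff P) (\<Prod>r\<leftarrow>rs. [:- r, 1:]))"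

definition is_splitting_field :: "'e::field set \<Rightarrow> 'e poly \<Rightarrow> bool" where
  "is_splitting_field F P \<longleftrightarrow> splits P \<and>
     (\<forall>K. is_subfield K \<and> F \<subseteq> K \<and> {x. poly P x = 0} \<subseteq> K \<longrightarrow> K = UNIV)"

definition Gal :: "'e::field set \<Rightarrow> ('e \<Rightarrow> 'e) set" where
  "Gal F = {\<sigma>. bij \<sigma> \<and> (\<forall>x y. \<sigma> (x + y) = \<sigma> x + \<sigma> y) \<and>
     (\<forall>x y. \<sigma> (x * y) = \<sigma> x * \<sigma> y) \<and> \<sigma> 1 = 1 \<and> (\<forall>x\<in>F. \<sigma> x = x)}"

text \<open>The prime-power field F_q inside the ambient field (char p, q a power of p).\<close>
definition Fq :: "nat \<Rightarrow> 'e::field set" where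
  "Fq q = {x. x ^ q = x}"

definition is_Fq_basis :: "nat \<Rightarrow> 'e::field set \<Rightarrow> nat \<Rightarrow> (nat \<Rightarrow> 'e) \<Rightarrow> bool" where
  "is_Fq_basis q V n \<alpha> \<longleftrightarrow> (\<forall>i<n. \<alpha> i \<in> V) \<and>
     (\<forall>c. (\<forall>i<n. c i \<in> Fq q) \<and> (\<Sum>i<n. c i * \<alpha> i) = 0 \<longrightarrow> (\<forall>i<n. c i = 0)) \<and>
     (\<forall>v\<in>V. \<exists>c. (\<forall>i<n. c i \<in> Fq q) \<and> v = (\<Sum>i<n. c i * \<alpha> i))"

definition acts_in_SL :: "nat \<Rightarrow> nat \<Rightarrow> (nat \<Rightarrow> 'e::field) \<Rightarrow> ('e \<Rightarrow> 'e) \<Rightarrow> bool" where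
  "acts_in_SL q n \<alpha> \<sigma> \<longleftrightarrow> (\<exists>C. (\<forall>i<n. \<forall>j<n. C i j \<in> Fq q) \<and>
     (\<forall>i<n. \<sigma> (\<alpha> i) = (\<Sum>j<n. C i j * \<alpha> j)) \<and>
     det (mat n n (\<lambda>(i, j). C i j)) = 1)"

end

theory Submission
  imports Defs
begin


lemma frob_add_prime:
  fixes x y :: "'e::field"
  assumes p: "prime p" and ch: "CHAR('e) = p"
  shows "(x + y) ^ p = x ^ p + y ^ p"
proof -
  have p0: "p > 0" using p prime_gt_0_nat by blast
  have mid: "(of_nat (p choose k) :: 'e) = 0" if "0 < k" "k < p" for k
  proof -
    have "p dvd (p choose k)" using dvd_choose_prime[of k p] that p by auto
    thus ?thesis using ch of_nat_eq_0_iff_char_dvd by metis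
  qed
  have "(x + y) ^ p = (\<Sum>k\<le>p. of_nat (p choose k) * x ^ k * y ^ (p - k))"
    by (rule binomial_ring)
  also have "\<dots> = (\<Sum>k\<in>{0,p}. of_nat (p choose k) * x ^ k * y ^ (p - k))"
    by (rule sum.mono_neutral_right) (use mid p0 in auto)
  also have "\<dots> = x ^ p + y ^ p" using p0 by simp
  finally show ?thesis .
qed

definition ppow :: "nat \<Rightarrow> nat \<Rightarrow> bool" where
  "ppow p m \<longleftrightarrow> (\<exists>k. m = p ^ k)"

lemma frob_add:
  fixes x y :: "'e::field"
  assumes p: "prime p" and ch: "CHAR('e) = p" and m: "ppow p m"
  shows "(x + y) ^ m = x ^ m + y ^ m"
proof -
  obtain k where k: "m = p ^ k" using m unfolding ppow_def by blast
  have "(x + y) ^ (p ^ k) = x ^ (p ^ k) + y ^ (p ^ k)" for x y :: 'e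
  proof (induction k arbitrary: x y)
    case 0 then show ?case by simp
  next
    case (Suc k)
    have "(x + y) ^ (p ^ Suc k) = ((x + y) ^ p) ^ (p ^ k)"
      by (simp add: power_mult)
    also have "\<dots> = (x ^ p + y ^ p) ^ (p ^ k)" using frob_add_prime[OF p ch] by simp
    also have "\<dots> = (x ^ p) ^ (p ^ k) + (y ^ p) ^ (p ^ k)" by (rule Suc)
    finally show ?case by (simp add: power_mult)
  qed
  thus ?thesis using k by simp
qed

lemma ppow_pos: "prime p \<Longrightarrow> ppow p m \<Longrightarrow> m > 0"
  unfolding ppow_def using prime_gt_0_nat by auto

lemma frob_neg:
  fixes x :: "'e::field"
  assumes p: "prime p" and ch: "CHAR('e) = p" and m: "ppow p m"
  shows "(- x) ^ m = - (x ^ m)"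
proof -
  have "0 = (x + - x) ^ m" using ppow_pos[OF p m] by simp
  also have "\<dots> = x ^ m + (- x) ^ m" by (rule frob_add[OF p ch m])
  finally show ?thesis by (simp add: eq_neg_iff_add_eq_0 add.commute)
qed

lemma frob_diff:
  fixes x y :: "'e::field"
  assumes p: "prime p" and ch: "CHAR('e) = p" and m: "ppow p m"
  shows "(x - y) ^ m = x ^ m - y ^ m"
  using frob_add[OF p ch m, of x "-y"] frob_neg[OF p ch m, of y] by simp

lemma frob_sum:
  fixes f :: "'i \<Rightarrow> 'e::field"
  assumes p: "prime p" and ch: "CHAR('e) = p" and m: "ppow p m"
  shows "(\<Sum>i\<in>A. f i) ^ m = (\<Sum>i\<in>A. f i ^ m)"
proof (cases "finite A")
  case True
  then show ?thesis
    by (induction A rule: finite_induct) (use ppow_pos[OF p m] frob_add[OF p ch m] in auto)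
next
  case False
  then show ?thesis using ppow_pos[OF p m] by simp
qed

lemma ppow_mult: "ppow p a \<Longrightarrow> ppow p b \<Longrightarrow> ppow p (a * b)"
  unfolding ppow_def by (metis power_add)

lemma ppow_power: "ppow p a \<Longrightarrow> ppow p (a ^ j)"
  unfolding ppow_def by (metis power_mult)

lemma Fq_power: "x \<in> Fq q \<Longrightarrow> x ^ (q ^ j) = x"
proof (induction j)
  case 0 then show ?case by simp
next
  case (Suc j)
  have "x ^ (q ^ Suc j) = (x ^ q) ^ (q ^ j)" by (simp add: power_mult)
  also have "\<dots> = x" using Suc unfolding Fq_def by simp
  finally show ?case .
qed


section \<open>Subfields\<close>

lemma sf_0: "is_subfield K \<Longrightarrow> 0 \<in> K" unfolding is_subfield_def by auto
lemma sf_1: "is_subfield K \<Longrightarrow> 1 \<in> K" unfolding is_subfield_def by auto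
lemma sf_add: "is_subfield K \<Longrightarrow> x \<in> K \<Longrightarrow> y \<in> K \<Longrightarrow> x + y \<in> K"
  unfolding is_subfield_def by auto
lemma sf_mult: "is_subfield K \<Longrightarrow> x \<in> K \<Longrightarrow> y \<in> K \<Longrightarrow> x * y \<in> K"
  unfolding is_subfield_def by auto
lemma sf_uminus: "is_subfield K \<Longrightarrow> x \<in> K \<Longrightarrow> - x \<in> K"
  unfolding is_subfield_def by auto
lemma sf_inverse: "is_subfield K \<Longrightarrow> x \<in> K \<Longrightarrow> inverse x \<in> K"
  unfolding is_subfield_def by auto
lemma sf_diff: "is_subfield K \<Longrightarrow> x \<in> K \<Longrightarrow> y \<in> K \<Longrightarrow> x - y \<in> K"
  using sf_add sf_uminus by (metis diff_conv_add_uminus)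
lemma sf_divide: "is_subfield K \<Longrightarrow> x \<in> K \<Longrightarrow> y \<in> K \<Longrightarrow> x / y \<in> K"
  using sf_mult sf_inverse by (metis divide_inverse)
lemma sf_sum: "is_subfield K \<Longrightarrow> (\<And>i. i \<in> A \<Longrightarrow> f i \<in> K) \<Longrightarrow> sum f A \<in> K"
proof (induction A rule: infinite_finite_induct)
  case (infinite A) then show ?case using sf_0 by auto
next
  case empty then show ?case using sf_0 by auto
next
  case (insert x F) then show ?case using sf_add by auto
qed
lemma sf_prod: "is_subfield K \<Longrightarrow> (\<And>i. i \<in> A \<Longrightarrow> f i \<in> K) \<Longrightarrow> prod f A \<in> K"
proof (induction A rule: infinite_finite_induct)
  case (infinite A) then show ?case using sf_1 by auto
next
  case empty then show ?case using sf_1 by auto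
next
  case (insert x F) then show ?case using sf_mult by auto
qed
lemma sf_power: "is_subfield K \<Longrightarrow> x \<in> K \<Longrightarrow> x ^ k \<in> K"
  by (induction k) (auto intro: sf_1 sf_mult)
lemma sf_of_int: "is_subfield K \<Longrightarrow> (of_int z :: 'e::field) \<in> K"
proof -
  assume K: "is_subfield K"
  have nat: "(of_nat k :: 'e) \<in> K" for k
    by (induction k) (auto intro: sf_0 sf_1 sf_add K)
  show ?thesis
  proof (cases "z \<ge> 0")
    case True then show ?thesis using nat[of "nat z"] by simp
  next
    case False
    hence "(of_int z :: 'e) = - of_nat (nat (- z))" by simp
    then show ?thesis using nat[of "nat (- z)"] sf_uminus[OF K] by simp
  qed
qed

section \<open>Polynomials with coefficients in a subfield\<close>

definition Kpoly :: "'e::field set \<Rightarrow> 'e poly \<Rightarrow> bool" where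
  "Kpoly K g \<longleftrightarrow> (\<forall>i. coeff g i \<in> K)"

context
  fixes K :: "'e::field set"
  assumes K: "is_subfield K"
begin

lemma Kpoly_0: "Kpoly K 0" unfolding Kpoly_def using sf_0[OF K] by simp
lemma Kpoly_const: "k \<in> K \<Longrightarrow> Kpoly K [:k:]"
  unfolding Kpoly_def using sf_0[OF K] by (auto simp: coeff_pCons split: nat.split)
lemma Kpoly_1: "Kpoly K 1" using Kpoly_const[OF sf_1[OF K]] by (simp add: one_pCons)
lemma Kpoly_pCons: "k \<in> K \<Longrightarrow> Kpoly K g \<Longrightarrow> Kpoly K (pCons k g)"
  unfolding Kpoly_def by (auto simp: coeff_pCons split: nat.split)
lemma Kpoly_X: "Kpoly K [:0,1:]"
  by (intro Kpoly_pCons Kpoly_const sf_0[OF K] sf_1[OF K])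
lemma Kpoly_add: "Kpoly K g \<Longrightarrow> Kpoly K h \<Longrightarrow> Kpoly K (g + h)"
  unfolding Kpoly_def using sf_add[OF K] by simp
lemma Kpoly_uminus: "Kpoly K g \<Longrightarrow> Kpoly K (- g)"
  unfolding Kpoly_def using sf_uminus[OF K] by simp
lemma Kpoly_diff: "Kpoly K g \<Longrightarrow> Kpoly K h \<Longrightarrow> Kpoly K (g - h)"
  unfolding Kpoly_def using sf_diff[OF K] by simp
lemma Kpoly_smult: "k \<in> K \<Longrightarrow> Kpoly K g \<Longrightarrow> Kpoly K (smult k g)"
  unfolding Kpoly_def using sf_mult[OF K] by simp
lemma Kpoly_monom: "k \<in> K \<Longrightarrow> Kpoly K (monom k d)"
  unfolding Kpoly_def using sf_0[OF K] by (simp add: coeff_monom)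
lemma Kpoly_mult: "Kpoly K g \<Longrightarrow> Kpoly K h \<Longrightarrow> Kpoly K (g * h)"
  unfolding Kpoly_def by (auto simp: coeff_mult intro!: sf_sum[OF K] sf_mult[OF K])
lemma Kpoly_coeff: "Kpoly K g \<Longrightarrow> coeff g i \<in> K" unfolding Kpoly_def by simp
lemma Kpoly_poly: "Kpoly K g \<Longrightarrow> x \<in> K \<Longrightarrow> poly g x \<in> K"
  unfolding poly_altdef by (intro sf_sum[OF K] sf_mult[OF K] sf_power[OF K] Kpoly_coeff)

lemma Kpoly_div:
  assumes "Kpoly K g" "Kpoly K m" "lead_coeff m = 1"
  shows "\<exists>h r. Kpoly K h \<and> Kpoly K r \<and> g = m * h + r \<and> (r = 0 \<or> degree r < degree m)"
  using assms(1)
proof (induction "degree g" arbitrary: g rule: less_induct)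
  case less
  show ?case
  proof (cases "g = 0 \<or> degree g < degree m")
    case True
    hence "Kpoly K 0 \<and> Kpoly K g \<and> g = m * 0 + g \<and> (g = 0 \<or> degree g < degree m)"
      using less.prems Kpoly_0 by simp
    then show ?thesis by (intro exI[of _ 0] exI[of _ g] conjI) auto
  next
    case False
    hence g0: "g \<noteq> 0" and dg: "degree m \<le> degree g" by auto
    have m0: "m \<noteq> 0" using assms(3) by auto
    define c where "c = lead_coeff g"
    define d where "d = degree g - degree m"
    have c0: "c \<noteq> 0" using g0 c_def by simp
    define g' where "g' = g - m * monom c d"
    have Kc: "c \<in> K" using less.prems Kpoly_coeff c_def by blast
    have Kg': "Kpoly K g'" unfolding g'_def
      by (intro Kpoly_diff Kpoly_mult Kpoly_monom less.prems assms(2) Kc)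
    have degmc: "degree (m * monom c d) = degree g"
      using m0 c0 dg by (simp add: degree_mult_eq degree_monom_eq d_def)
    have lcmc: "coeff (m * monom c d) (degree g) = c"
      using degmc m0 c0 assms(3) by (metis lead_coeff_mult lead_coeff_monom mult_1)
    have cg': "coeff g' (degree g) = 0" unfolding g'_def using lcmc c_def by simp
    have dg'le: "degree g' \<le> degree g" unfolding g'_def using degmc
      by (metis degree_diff_le order_refl)
    show ?thesis
    proof (cases "g' = 0")
      case True
      hence "g = m * monom c d + 0" unfolding g'_def by simp
      moreover have "Kpoly K (monom c d)" using Kpoly_monom[OF Kc] .
      ultimately show ?thesis using Kpoly_0
        by (intro exI[of _ "monom c d"] exI[of _ 0] conjI) auto
    next
      case False
      hence "degree g' \<noteq> degree g" using cg' by (metis leading_coeff_0_iff)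
      hence "degree g' < degree g" using dg'le by simp
      then obtain h r where hr: "Kpoly K h" "Kpoly K r" "g' = m * h + r" "r = 0 \<or> degree r < degree m"
        using less.hyps[OF _ Kg'] by blast
      have "g = m * (h + monom c d) + r" using hr(3) unfolding g'_def by (simp add: algebra_simps)
      moreover have "Kpoly K (h + monom c d)" using Kpoly_add[OF hr(1) Kpoly_monom[OF Kc]] .
      ultimately show ?thesis using hr(2,4)
        by (intro exI[of _ "h + monom c d"] exI[of _ r] conjI)
    qed
  qed
qed

definition minpoly_for :: "'e \<Rightarrow> 'e poly \<Rightarrow> bool" where
  "minpoly_for r m \<longleftrightarrow> Kpoly K m \<and> lead_coeff m = 1 \<and> poly m r = 0 \<and>
     (\<forall>g. Kpoly K g \<and> g \<noteq> 0 \<and> poly g r = 0 \<longrightarrow> degree m \<le> degree g)"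

lemma minpoly_exists:
  assumes "Kpoly K g" "g \<noteq> 0" "poly g r = 0"
  shows "\<exists>m. minpoly_for r m"
proof -
  let ?P = "\<lambda>d. \<exists>g. Kpoly K g \<and> g \<noteq> 0 \<and> poly g r = 0 \<and> degree g = d"
  have "?P (degree g)" using assms by blast
  hence "?P (LEAST d. ?P d)" by (rule LeastI)
  then obtain g0 where g0: "Kpoly K g0" "g0 \<noteq> 0" "poly g0 r = 0" "degree g0 = (LEAST d. ?P d)"
    by blast
  define m where "m = smult (inverse (lead_coeff g0)) g0"
  have "Kpoly K m" unfolding m_def
    by (intro Kpoly_smult sf_inverse[OF K] Kpoly_coeff g0(1))
  moreover have "lead_coeff m = 1" unfolding m_def using g0(2) by simp
  moreover have "poly m r = 0" unfolding m_def using g0(3) by simp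
  moreover have "degree m = degree g0" unfolding m_def using g0(2) by simp
  moreover have "degree g0 \<le> degree g" if "Kpoly K g" "g \<noteq> 0" "poly g r = 0" for g
    unfolding g0(4) by (rule Least_le) (use that in blast)
  ultimately have "minpoly_for r m" unfolding minpoly_for_def by metis
  thus ?thesis by blast
qed

lemma minpoly_dvd:
  assumes "minpoly_for r m" "Kpoly K g" "poly g r = 0"
  shows "\<exists>h. Kpoly K h \<and> g = m * h"
proof -
  have m: "Kpoly K m" "lead_coeff m = 1" "poly m r = 0" using assms(1) unfolding minpoly_for_def by auto
  obtain h rr where hr: "Kpoly K h" "Kpoly K rr" "g = m * h + rr" "rr = 0 \<or> degree rr < degree m"
    using Kpoly_div[OF assms(2) m(1,2)] by blast
  have "poly rr r = 0" using hr(3) assms(3) m(3) by (metis add_0 mult_zero_left poly_add poly_mult)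
  hence "rr = 0" using hr(2,4) assms(1) unfolding minpoly_for_def by (meson leD)
  thus ?thesis using hr(1,3) by (intro exI[of _ h]) simp
qed

lemma minpoly_degree: "minpoly_for r m \<Longrightarrow> degree m \<ge> 1"
  unfolding minpoly_for_def
  by (metis leading_coeff_0_iff less_one not_le one_neq_zero poly_0_coeff_0 poly_zero)

end


definition hom_on :: "'e::field set \<Rightarrow> ('e \<Rightarrow> 'e) \<Rightarrow> bool" where
  "hom_on K \<tau> \<longleftrightarrow> (\<forall>x\<in>K. \<forall>y\<in>K. \<tau> (x + y) = \<tau> x + \<tau> y \<and> \<tau> (x * y) = \<tau> x * \<tau> y) \<and> \<tau> 1 = 1"

context
  fixes K :: "'e::field set" and \<tau> :: "'e \<Rightarrow> 'e"
  assumes K: "is_subfield K" and H: "hom_on K \<tau>"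
begin

lemma hom_add: "x \<in> K \<Longrightarrow> y \<in> K \<Longrightarrow> \<tau> (x + y) = \<tau> x + \<tau> y"
  using H unfolding hom_on_def by blast
lemma hom_mult: "x \<in> K \<Longrightarrow> y \<in> K \<Longrightarrow> \<tau> (x * y) = \<tau> x * \<tau> y"
  using H unfolding hom_on_def by blast
lemma hom_one: "\<tau> 1 = 1"
  using H unfolding hom_on_def by blast
lemma hom_zero: "\<tau> 0 = 0"
proof -
  have "\<tau> (0 + 0) = \<tau> 0 + \<tau> 0" using hom_add sf_0[OF K] by blast
  hence "\<tau> 0 + \<tau> 0 = \<tau> 0 + 0" by simp
  thus ?thesis by (rule add_left_imp_eq)
qed
lemma hom_uminus: "x \<in> K \<Longrightarrow> \<tau> (- x) = - \<tau> x"
proof -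
  assume x: "x \<in> K"
  have "\<tau> (x + - x) = \<tau> x + \<tau> (- x)" using hom_add x sf_uminus[OF K] by blast
  thus ?thesis using hom_zero by (simp add: eq_neg_iff_add_eq_0 add.commute)
qed
lemma hom_diff: "x \<in> K \<Longrightarrow> y \<in> K \<Longrightarrow> \<tau> (x - y) = \<tau> x - \<tau> y"
  using hom_add[of x "-y"] hom_uminus[of y] sf_uminus[OF K, of y] by simp
lemma hom_inverse: "x \<in> K \<Longrightarrow> \<tau> (inverse x) = inverse (\<tau> x)"
proof (cases "x = 0")
  case True then show ?thesis using hom_zero by simp
next
  case False
  assume x: "x \<in> K"
  have "\<tau> (x * inverse x) = \<tau> x * \<tau> (inverse x)" using hom_mult x sf_inverse[OF K] by blast
  hence "\<tau> x * \<tau> (inverse x) = 1" using False hom_one by simp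
  thus ?thesis by (metis inverse_unique)
qed
lemma hom_nonzero: "x \<in> K \<Longrightarrow> x \<noteq> 0 \<Longrightarrow> \<tau> x \<noteq> 0"
proof -
  assume x: "x \<in> K" "x \<noteq> 0"
  have "\<tau> (x * inverse x) = \<tau> x * \<tau> (inverse x)" using hom_mult x sf_inverse[OF K] by blast
  hence "\<tau> x * \<tau> (inverse x) = 1" using x hom_one by simp
  thus ?thesis by auto
qed
lemma hom_divide: "x \<in> K \<Longrightarrow> y \<in> K \<Longrightarrow> \<tau> (x / y) = \<tau> x / \<tau> y"
  using hom_mult[of x "inverse y"] hom_inverse[of y] sf_inverse[OF K, of y]
  by (simp add: divide_inverse)
lemma hom_sum: "(\<And>i. i \<in> A \<Longrightarrow> f i \<in> K) \<Longrightarrow> \<tau> (sum f A) = (\<Sum>i\<in>A. \<tau> (f i))"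
proof (induction A rule: infinite_finite_induct)
  case (infinite A) then show ?case using hom_zero by simp
next
  case empty then show ?case using hom_zero by simp
next
  case (insert x F)
  have "\<tau> (f x + sum f F) = \<tau> (f x) + \<tau> (sum f F)"
    by (rule hom_add) (use insert in \<open>auto intro: sf_sum[OF K]\<close>)
  then show ?case using insert by simp
qed
lemma hom_prod: "(\<And>i. i \<in> A \<Longrightarrow> f i \<in> K) \<Longrightarrow> \<tau> (prod f A) = (\<Prod>i\<in>A. \<tau> (f i))"
proof (induction A rule: infinite_finite_induct)
  case (infinite A) then show ?case using hom_one by simp
next
  case empty then show ?case using hom_one by simp
next
  case (insert x F)
  have "\<tau> (f x * prod f F) = \<tau> (f x) * \<tau> (prod f F)"
    by (rule hom_mult) (use insert in \<open>auto intro: sf_prod[OF K]\<close>)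
  then show ?case using insert by simp
qed
lemma hom_power: "x \<in> K \<Longrightarrow> \<tau> (x ^ k) = \<tau> x ^ k"
  by (induction k) (simp_all add: hom_one hom_mult sf_power[OF K])

lemma coeff_tm: "coeff (map_poly \<tau> g) i = \<tau> (coeff g i)"
  by (simp add: coeff_map_poly hom_zero)

lemma tm_add: "Kpoly K g \<Longrightarrow> Kpoly K h \<Longrightarrow> map_poly \<tau> (g + h) = map_poly \<tau> g + map_poly \<tau> h"
  by (rule poly_eqI) (simp add: coeff_tm hom_add Kpoly_coeff[OF K])
lemma tm_uminus: "Kpoly K g \<Longrightarrow> map_poly \<tau> (- g) = - map_poly \<tau> g"
  by (rule poly_eqI) (simp add: coeff_tm hom_uminus Kpoly_coeff[OF K])
lemma tm_diff: "Kpoly K g \<Longrightarrow> Kpoly K h \<Longrightarrow> map_poly \<tau> (g - h) = map_poly \<tau> g - map_poly \<tau> h"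
  by (rule poly_eqI) (simp add: coeff_tm hom_diff Kpoly_coeff[OF K])
lemma tm_mult: "Kpoly K g \<Longrightarrow> Kpoly K h \<Longrightarrow> map_poly \<tau> (g * h) = map_poly \<tau> g * map_poly \<tau> h"
proof (rule poly_eqI)
  fix n assume g: "Kpoly K g" and h: "Kpoly K h"
  have "coeff (map_poly \<tau> (g * h)) n = \<tau> (\<Sum>i\<le>n. coeff g i * coeff h (n - i))"
    by (simp add: coeff_tm coeff_mult)
  also have "\<dots> = (\<Sum>i\<le>n. \<tau> (coeff g i) * \<tau> (coeff h (n - i)))"
    using g h by (simp add: hom_sum hom_mult Kpoly_coeff[OF K] sf_mult[OF K])
  also have "\<dots> = coeff (map_poly \<tau> g * map_poly \<tau> h) n"
    by (simp add: coeff_tm coeff_mult)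
  finally show "coeff (map_poly \<tau> (g * h)) n = coeff (map_poly \<tau> g * map_poly \<tau> h) n" .
qed
lemma tm_smult: "k \<in> K \<Longrightarrow> Kpoly K g \<Longrightarrow> map_poly \<tau> (smult k g) = smult (\<tau> k) (map_poly \<tau> g)"
  by (rule poly_eqI) (simp add: coeff_tm hom_mult Kpoly_coeff[OF K])
lemma tm_const: "map_poly \<tau> [:k:] = [:\<tau> k:]"
  by (rule poly_eqI) (simp add: coeff_tm coeff_pCons hom_zero split: nat.split)
lemma tm_one: "map_poly \<tau> 1 = 1"
  using tm_const[of 1] hom_one by (simp add: one_pCons)
lemma tm_X: "map_poly \<tau> [:0, 1:] = [:0, 1:]"
  by (rule poly_eqI) (simp add: coeff_tm coeff_pCons hom_zero hom_one split: nat.split)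
lemma tm_degree: "Kpoly K g \<Longrightarrow> degree (map_poly \<tau> g) = degree g"
proof (cases "g = 0")
  case True then show ?thesis by simp
next
  case False
  assume g: "Kpoly K g"
  have "coeff (map_poly \<tau> g) (degree g) \<noteq> 0"
    using False g hom_nonzero Kpoly_coeff[OF K] by (simp add: coeff_tm)
  hence "degree g \<le> degree (map_poly \<tau> g)" by (rule le_degree)
  moreover have "degree (map_poly \<tau> g) \<le> degree g" by (rule map_poly_degree_leq)
  ultimately show ?thesis by simp
qed
lemma tm_lead: "Kpoly K g \<Longrightarrow> lead_coeff (map_poly \<tau> g) = \<tau> (lead_coeff g)"
  using tm_degree coeff_tm by simp

end

section \<open>Adjoining one element\<close>

locale adjoin =
  fixes K :: "'e::field set" and \<tau> :: "'e \<Rightarrow> 'e" and r s :: 'e and m :: "'e poly"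
  assumes K: "is_subfield K" and H: "hom_on K \<tau>"
    and mp: "minpoly_for K r m" and root: "poly (map_poly \<tau> m) s = 0"
begin

definition Ev :: "'e poly \<Rightarrow> 'e" where "Ev g = poly g r"
definition Ev' :: "'e poly \<Rightarrow> 'e" where "Ev' g = poly (map_poly \<tau> g) s"

lemma m: "Kpoly K m" "lead_coeff m = 1" "Ev m = 0" "Ev' m = 0" "m \<noteq> 0"
  using mp root unfolding minpoly_for_def[OF K] Ev_def Ev'_def by auto

lemma Ev'_add: "Kpoly K g \<Longrightarrow> Kpoly K h \<Longrightarrow> Ev' (g + h) = Ev' g + Ev' h"
  unfolding Ev'_def using tm_add[OF K H] by simp
lemma Ev'_diff: "Kpoly K g \<Longrightarrow> Kpoly K h \<Longrightarrow> Ev' (g - h) = Ev' g - Ev' h"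
  unfolding Ev'_def using tm_diff[OF K H] by simp
lemma Ev'_uminus: "Kpoly K g \<Longrightarrow> Ev' (- g) = - Ev' g"
  unfolding Ev'_def using tm_uminus[OF K H] by simp
lemma Ev'_mult: "Kpoly K g \<Longrightarrow> Kpoly K h \<Longrightarrow> Ev' (g * h) = Ev' g * Ev' h"
  unfolding Ev'_def using tm_mult[OF K H] by simp
lemma Ev'_one: "Ev' 1 = 1"
  unfolding Ev'_def using tm_one[OF K H] by simp
lemma Ev'_const: "Ev' [:k:] = \<tau> k"
  unfolding Ev'_def using tm_const[OF K H] by simp
lemma Ev'_X: "Ev' [:0, 1:] = s"
  unfolding Ev'_def using tm_X[OF K H] by simp

lemma E1: "Kpoly K g \<Longrightarrow> Ev g = 0 \<Longrightarrow> Ev' g = 0"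
proof -
  assume g: "Kpoly K g" "Ev g = 0"
  obtain h where h: "Kpoly K h" "g = m * h" using minpoly_dvd[OF K mp g(1)] g(2) unfolding Ev_def by blast
  show ?thesis using Ev'_mult[OF m(1) h(1)] m(4) h(2) by simp
qed

lemma E2: "Kpoly K g \<Longrightarrow> Ev' g = 0 \<Longrightarrow> Ev g = 0"
proof (rule ccontr)
  assume g: "Kpoly K g" "Ev' g = 0" and ng: "Ev g \<noteq> 0"
  obtain h u where hu: "Kpoly K h" "Kpoly K u" "g = m * h + u" "u = 0 \<or> degree u < degree m"
    using Kpoly_div[OF K g(1) m(1,2)] by blast
  have Evu: "Ev u = Ev g" using hu(3) m(3) unfolding Ev_def by simp
  hence u0: "u \<noteq> 0" using ng unfolding Ev_def by auto
  have degu: "degree u < degree m" using hu(4) u0 by simp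
  have Ev'u: "Ev' u = 0"
  proof -
    have "Ev' g = Ev' (m * h) + Ev' u" using hu Ev'_add Kpoly_mult[OF K m(1) hu(1)] by simp
    thus ?thesis using g(2) Ev'_mult[OF m(1) hu(1)] m(4) by simp
  qed
  let ?S = "\<lambda>d. \<exists>w. Kpoly K w \<and> w \<noteq> 0 \<and> Ev' w = 0 \<and> degree w = d"
  have "?S (degree u)" using hu(2) u0 Ev'u by blast
  hence "?S (LEAST d. ?S d)" by (rule LeastI)
  then obtain w0 where w0: "Kpoly K w0" "w0 \<noteq> 0" "Ev' w0 = 0" "degree w0 = (LEAST d. ?S d)" by blast
  have d0u: "degree w0 \<le> degree u" unfolding w0(4) by (rule Least_le) (use hu(2) u0 Ev'u in blast)
  define w where "w = smult (inverse (lead_coeff w0)) w0"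
  have lcK: "inverse (lead_coeff w0) \<in> K" using sf_inverse[OF K] Kpoly_coeff[OF K w0(1)] by blast
  have w: "Kpoly K w" "lead_coeff w = 1" "degree w = degree w0" "w \<noteq> 0"
    unfolding w_def using w0(2) Kpoly_smult[OF K lcK w0(1)] by auto
  have Ev'w: "Ev' w = 0" unfolding w_def Ev'_def using tm_smult[OF K H lcK w0(1)] w0(3)
    unfolding Ev'_def by simp
  obtain h' v where hv: "Kpoly K h'" "Kpoly K v" "m = w * h' + v" "v = 0 \<or> degree v < degree w"
    using Kpoly_div[OF K m(1) w(1,2)] by blast
  have Ev'v: "Ev' v = 0"
  proof -
    have "Ev' m = Ev' (w * h') + Ev' v" using hv Ev'_add Kpoly_mult[OF K w(1) hv(1)] by simp
    thus ?thesis using m(4) Ev'_mult[OF w(1) hv(1)] Ev'w by simp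
  qed
  have "v = 0"
  proof (rule ccontr)
    assume "v \<noteq> 0"
    hence "degree w0 \<le> degree v" unfolding w0(4) by (intro Least_le) (use hv(2) Ev'v in blast)
    thus False using hv(4) w(3) \<open>v \<noteq> 0\<close> by simp
  qed
  hence mw: "m = w * h'" using hv(3) by simp
  have Evw: "Ev w \<noteq> 0"
  proof
    assume "Ev w = 0"
    hence "degree m \<le> degree w" using mp w(1,4) unfolding minpoly_for_def[OF K] Ev_def by blast
    thus False using w(3) d0u degu by simp
  qed
  have "Ev h' = 0" using m(3) mw Evw unfolding Ev_def by simp
  moreover have h'0: "h' \<noteq> 0" using mw m(5) by auto
  ultimately have "degree m \<le> degree h'" using mp hv(1) unfolding minpoly_for_def[OF K] Ev_def by blast
  moreover have "degree m = degree w + degree h'" using mw w(4) h'0 by (simp add: degree_mult_eq)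
  ultimately have "degree w = 0" by simp
  hence "w = 1" using w(2) degree_0_id[of w] by (simp add: one_pCons)
  thus False using Ev'w Ev'_one by simp
qed

definition R :: "'e \<Rightarrow> 'e poly \<Rightarrow> 'e poly \<Rightarrow> bool" where
  "R x g h \<longleftrightarrow> Kpoly K g \<and> Kpoly K h \<and> Ev h \<noteq> 0 \<and> x = Ev g / Ev h"

definition K' :: "'e set" where "K' = {x. \<exists>g h. R x g h}"

definition \<tau>' :: "'e \<Rightarrow> 'e" where
  "\<tau>' x = (let gh = (SOME gh. R x (fst gh) (snd gh)) in Ev' (fst gh) / Ev' (snd gh))"

lemma Ev'_nz: "R x g h \<Longrightarrow> Ev' h \<noteq> 0"
  using E2 unfolding R_def by blast

lemma WD:
  assumes "R x g1 h1" "R x g2 h2"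
  shows "Ev' g1 / Ev' h1 = Ev' g2 / Ev' h2"
proof -
  have a: "Kpoly K g1" "Kpoly K h1" "Ev h1 \<noteq> 0" "x = Ev g1 / Ev h1"
    and b: "Kpoly K g2" "Kpoly K h2" "Ev h2 \<noteq> 0" "x = Ev g2 / Ev h2"
    using assms unfolding R_def by auto
  have "Ev g1 * Ev h2 = Ev g2 * Ev h1" using a b by (simp add: field_simps)
  hence "Ev (g1 * h2 - g2 * h1) = 0" unfolding Ev_def by simp
  hence "Ev' (g1 * h2 - g2 * h1) = 0"
    by (rule E1[OF Kpoly_diff[OF K Kpoly_mult[OF K a(1) b(2)] Kpoly_mult[OF K b(1) a(2)]]])
  hence "Ev' g1 * Ev' h2 = Ev' g2 * Ev' h1"
    using Ev'_diff[OF Kpoly_mult[OF K a(1) b(2)] Kpoly_mult[OF K b(1) a(2)]]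
      Ev'_mult[OF a(1) b(2)] Ev'_mult[OF b(1) a(2)] by simp
  thus ?thesis using Ev'_nz[OF assms(1)] Ev'_nz[OF assms(2)] by (simp add: field_simps)
qed

lemma \<tau>'_eq: assumes "R x g h" shows "\<tau>' x = Ev' g / Ev' h"
proof -
  have "\<exists>gh. R x (fst gh) (snd gh)" using assms by (intro exI[of _ "(g, h)"]) simp
  hence "R x (fst (SOME gh. R x (fst gh) (snd gh))) (snd (SOME gh. R x (fst gh) (snd gh)))"
    by (rule someI_ex)
  thus ?thesis unfolding \<tau>'_def Let_def using WD assms by blast
qed

lemma R_add: "R x g1 h1 \<Longrightarrow> R y g2 h2 \<Longrightarrow> R (x + y) (g1 * h2 + g2 * h1) (h1 * h2)"
  unfolding R_def Ev_def
  by (auto simp: Kpoly_mult[OF K] Kpoly_add[OF K] field_simps)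
lemma R_mult: "R x g1 h1 \<Longrightarrow> R y g2 h2 \<Longrightarrow> R (x * y) (g1 * g2) (h1 * h2)"
  unfolding R_def Ev_def by (auto simp: Kpoly_mult[OF K])
lemma R_uminus: "R x g h \<Longrightarrow> R (- x) (- g) h"
  unfolding R_def Ev_def by (auto simp: Kpoly_uminus[OF K])
lemma R_const: "k \<in> K \<Longrightarrow> R k [:k:] 1"
  unfolding R_def Ev_def by (auto simp: Kpoly_const[OF K] Kpoly_1[OF K])
lemma R_X: "R r [:0, 1:] 1"
  unfolding R_def Ev_def by (auto simp: Kpoly_X[OF K] Kpoly_1[OF K])

lemma K'_subfield: "is_subfield K'"
  unfolding is_subfield_def
proof (intro conjI ballI)
  show "0 \<in> K'" using R_const[OF sf_0[OF K]] unfolding K'_def by auto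
  show "1 \<in> K'" using R_const[OF sf_1[OF K]] unfolding K'_def by auto
  fix x assume "x \<in> K'"
  then obtain g h where gh: "R x g h" unfolding K'_def by blast
  show "- x \<in> K'" using R_uminus[OF gh] unfolding K'_def by blast
  show "inverse x \<in> K'"
  proof (cases "Ev g = 0")
    case True
    hence "inverse x = 0" using gh unfolding R_def by simp
    thus ?thesis using \<open>0 \<in> K'\<close> by simp
  next
    case False
    hence "R (inverse x) h g" using gh unfolding R_def by auto
    thus ?thesis unfolding K'_def by blast
  qed
  fix y assume "y \<in> K'"
  then obtain g2 h2 where gh2: "R y g2 h2" unfolding K'_def by blast
  show "x + y \<in> K'" using R_add[OF gh gh2] unfolding K'_def by blast
  show "x * y \<in> K'" using R_mult[OF gh gh2] unfolding K'_def by blast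
qed

lemma K'_hom: "hom_on K' \<tau>'"
  unfolding hom_on_def
proof (intro conjI ballI)
  show "\<tau>' 1 = 1" using \<tau>'_eq[OF R_const[OF sf_1[OF K]]] Ev'_one by (simp add: one_pCons)
  fix x y assume "x \<in> K'" "y \<in> K'"
  then obtain g1 h1 g2 h2 where a: "R x g1 h1" and b: "R y g2 h2" unfolding K'_def by blast
  have k: "Kpoly K g1" "Kpoly K h1" "Kpoly K g2" "Kpoly K h2" using a b unfolding R_def by auto
  have nz: "Ev' h1 \<noteq> 0" "Ev' h2 \<noteq> 0" using Ev'_nz a b by auto
  show "\<tau>' (x + y) = \<tau>' x + \<tau>' y"
    unfolding \<tau>'_eq[OF R_add[OF a b]] \<tau>'_eq[OF a] \<tau>'_eq[OF b]
    using nz k by (simp add: Ev'_add Ev'_mult Kpoly_mult[OF K] field_simps)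
  show "\<tau>' (x * y) = \<tau>' x * \<tau>' y"
    unfolding \<tau>'_eq[OF R_mult[OF a b]] \<tau>'_eq[OF a] \<tau>'_eq[OF b]
    using nz k by (simp add: Ev'_mult)
qed

lemma K_sub: "K \<subseteq> K'" using R_const unfolding K'_def by blast
lemma ext: "x \<in> K \<Longrightarrow> \<tau>' x = \<tau> x"
  using \<tau>'_eq[OF R_const] Ev'_const Ev'_one by simp
lemma r_in: "r \<in> K'" using R_X unfolding K'_def by blast
lemma r_img: "\<tau>' r = s" using \<tau>'_eq[OF R_X] Ev'_X Ev'_one by simp

end

lemma adjoin_ext:
  assumes "is_subfield K" "hom_on K \<tau>" "minpoly_for K r m" "poly (map_poly \<tau> m) s = 0"
  shows "\<exists>K' \<tau>'. is_subfield K' \<and> K \<subseteq> K' \<and> r \<in> K' \<and> hom_on K' \<tau>' \<and>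
     (\<forall>x\<in>K. \<tau>' x = \<tau> x) \<and> \<tau>' r = s"
proof -
  interpret adjoin K \<tau> r s m using assms by unfold_locales
  show ?thesis using K'_subfield K_sub r_in K'_hom ext r_img by blast
qed


lemma subfield_UNIV: "is_subfield (UNIV :: 'e::field set)"
  unfolding is_subfield_def by auto

lemma hom_poly:
  assumes K: "is_subfield K" and H: "hom_on K \<tau>" and g: "Kpoly K g" and x: "x \<in> K"
  shows "\<tau> (poly g x) = poly (map_poly \<tau> g) (\<tau> x)"
proof -
  have "\<tau> (poly g x) = (\<Sum>i\<le>degree g. \<tau> (coeff g i * x ^ i))"
    unfolding poly_altdef
    by (rule hom_sum[OF K H]) (intro sf_mult[OF K] sf_power[OF K] Kpoly_coeff[OF K g] x)
  also have "\<dots> = (\<Sum>i\<le>degree g. \<tau> (coeff g i) * \<tau> x ^ i)"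
    by (intro sum.cong refl) (simp add: hom_mult[OF K H] hom_power[OF K H] sf_power[OF K] x
        Kpoly_coeff[OF K g])
  also have "\<dots> = poly (map_poly \<tau> g) (\<tau> x)"
    unfolding poly_altdef tm_degree[OF K H g] by (simp add: coeff_tm[OF K H])
  finally show ?thesis .
qed

lemma Gal_hom: "\<sigma> \<in> Gal F \<Longrightarrow> hom_on UNIV \<sigma>"
  unfolding Gal_def hom_on_def by auto

lemma hom_UNIV_Gal:
  assumes F: "is_subfield F" and P: "Kpoly F P" "P \<noteq> 0" and spl: "is_splitting_field F P"
    and H: "hom_on UNIV \<tau>" and fixF: "\<forall>x\<in>F. \<tau> x = x"
  shows "\<tau> \<in> Gal F"
proof -
  let ?V = "{x. poly P x = 0}"
  have U: "is_subfield (UNIV :: 'a set)" by (rule subfield_UNIV)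
  have add: "\<tau> (x + y) = \<tau> x + \<tau> y" for x y using hom_add[OF U H] by simp
  have mult: "\<tau> (x * y) = \<tau> x * \<tau> y" for x y using hom_mult[OF U H] by simp
  have inj: "inj \<tau>"
  proof (rule injI)
    fix x y assume "\<tau> x = \<tau> y"
    hence "\<tau> (x - y) = 0" using hom_diff[OF U H] by simp
    thus "x = y" using hom_nonzero[OF U H] by (metis UNIV_I eq_iff_diff_eq_0)
  qed
  have PU: "Kpoly UNIV P" unfolding Kpoly_def by simp
  have mapP: "map_poly \<tau> P = P"
    by (rule poly_eqI) (use P(1) fixF in \<open>simp add: coeff_tm[OF U H] Kpoly_def\<close>)
  have fin: "finite ?V" using poly_roots_finite[OF P(2)] .
  have "\<tau> ` ?V \<subseteq> ?V"
  proof
    fix y assume "y \<in> \<tau> ` ?V"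
    then obtain x where x: "poly P x = 0" "y = \<tau> x" by blast
    have "\<tau> (poly P x) = poly P (\<tau> x)" using hom_poly[OF U H PU] mapP by simp
    thus "y \<in> ?V" using x hom_zero[OF U H] by simp
  qed
  hence imV: "\<tau> ` ?V = ?V" using endo_inj_surj[OF fin] inj_on_subset[OF inj] by blast
  let ?T = "range \<tau>"
  have T: "is_subfield ?T"
    unfolding is_subfield_def
  proof (intro conjI ballI)
    show "0 \<in> ?T" using hom_zero[OF U H] by (metis rangeI)
    show "1 \<in> ?T" using hom_one[OF U H] by (metis rangeI)
    fix x assume "x \<in> ?T"
    then obtain a where a: "x = \<tau> a" by blast
    show "- x \<in> ?T" using hom_uminus[OF U H] a by (metis UNIV_I rangeI)
    show "inverse x \<in> ?T" using hom_inverse[OF U H] a by (metis UNIV_I rangeI)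
    fix y assume "y \<in> ?T"
    then obtain b where b: "y = \<tau> b" by blast
    show "x + y \<in> ?T" using add a b by (metis rangeI)
    show "x * y \<in> ?T" using mult a b by (metis rangeI)
  qed
  have "F \<subseteq> ?T" using fixF by (metis rangeI subsetI)
  moreover have "?V \<subseteq> ?T" using imV by blast
  ultimately have "?T = UNIV" using spl T unfolding is_splitting_field_def by blast
  hence "bij \<tau>" using inj by (simp add: bij_def)
  thus ?thesis unfolding Gal_def using add mult hom_one[OF U H] fixF by blast
qed

lemma IET:
  assumes F: "is_subfield F" and P: "Kpoly F P" "P \<noteq> 0" and spl: "is_splitting_field F P"
    and cardV: "card {x. poly P x = 0} = degree P"
    and K: "is_subfield K" "F \<subseteq> K" and H: "hom_on K \<tau>" and fixF: "\<forall>x\<in>F. \<tau> x = x"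
  shows "\<exists>\<sigma>\<in>Gal F. \<forall>x\<in>K. \<sigma> x = \<tau> x"
  using K H fixF
proof (induction "card ({x. poly P x = 0} - K)" arbitrary: K \<tau> rule: less_induct)
  case less
  let ?V = "{x. poly P x = 0}"
  have fin: "finite ?V" using poly_roots_finite[OF P(2)] .
  show ?case
  proof (cases "?V \<subseteq> K")
    case True
    hence "K = UNIV" using spl less.prems unfolding is_splitting_field_def by blast
    hence "hom_on UNIV \<tau>" using less.prems by simp
    hence "\<tau> \<in> Gal F" using hom_UNIV_Gal[OF F P spl] less.prems by blast
    thus ?thesis by blast
  next
    case False
    then obtain r where r: "poly P r = 0" "r \<notin> K" by blast
    have KK: "is_subfield K" and FK: "F \<subseteq> K" and HK: "hom_on K \<tau>" and fixK: "\<forall>x\<in>F. \<tau> x = x"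
      using less.prems by auto
    have PK: "Kpoly K P" using P(1) FK unfolding Kpoly_def by blast
    obtain m where mp: "minpoly_for K r m" using minpoly_exists[OF KK PK P(2) r(1)] by blast
    have m: "Kpoly K m" "lead_coeff m = 1" "degree m \<ge> 1"
      using mp minpoly_degree[OF KK mp] unfolding minpoly_for_def[OF KK] by auto
    obtain h where h: "Kpoly K h" "P = m * h" using minpoly_dvd[OF KK mp PK r(1)] by blast
    have mapP: "map_poly \<tau> P = P"
      by (rule poly_eqI) (use P(1) fixK in \<open>simp add: coeff_tm[OF KK HK] Kpoly_def\<close>)
    have fact: "P = map_poly \<tau> m * map_poly \<tau> h" using mapP tm_mult[OF KK HK m(1) h(1)] h(2) by simp
    have h0: "h \<noteq> 0" using h(2) P(2) by auto
    have m0: "m \<noteq> 0" using m(2) by auto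
    obtain s where s: "poly (map_poly \<tau> m) s = 0"
    proof (rule ccontr)
      assume ns: "\<not> thesis"
      hence nr: "poly (map_poly \<tau> m) x \<noteq> 0" for x using that by blast
      have th0: "map_poly \<tau> h \<noteq> 0"
      proof
        assume "map_poly \<tau> h = 0"
        hence "P = 0" using fact by simp
        thus False using P(2) by simp
      qed
      have "?V \<subseteq> {x. poly (map_poly \<tau> h) x = 0}"
      proof
        fix x assume "x \<in> ?V"
        hence "poly P x = 0" by simp
        hence "poly (map_poly \<tau> m * map_poly \<tau> h) x = 0" using fact by simp
        hence "poly (map_poly \<tau> m) x * poly (map_poly \<tau> h) x = 0" by (simp only: poly_mult)
        thus "x \<in> {x. poly (map_poly \<tau> h) x = 0}" using nr by simp
      qed
      hence "card ?V \<le> card {x. poly (map_poly \<tau> h) x = 0}"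
        by (intro card_mono poly_roots_finite th0)
      also have "\<dots> \<le> degree (map_poly \<tau> h)" by (rule card_poly_roots_bound[OF th0])
      also have "\<dots> = degree h" by (rule tm_degree[OF KK HK h(1)])
      finally have "card ?V \<le> degree h" .
      moreover have "degree P = degree m + degree h" using h(2) m0 h0 by (simp add: degree_mult_eq)
      ultimately show False using cardV m(3) by simp
    qed
    obtain K' \<tau>' where ext: "is_subfield K'" "K \<subseteq> K'" "r \<in> K'" "hom_on K' \<tau>'"
        "\<forall>x\<in>K. \<tau>' x = \<tau> x" "\<tau>' r = s"
      using adjoin_ext[OF KK HK mp s] by blast
    have lt: "card (?V - K') < card (?V - K)"
    proof (rule psubset_card_mono)
      show "finite (?V - K)" using fin by simp
      show "?V - K' \<subset> ?V - K" using ext(2,3) r by blast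
    qed
    have "\<exists>\<sigma>\<in>Gal F. \<forall>x\<in>K'. \<sigma> x = \<tau>' x"
      by (rule less.hyps[OF lt ext(1) _ ext(4)]) (use ext FK fixK in auto)
    then show ?thesis using ext(2,5) by (metis subsetD)
  qed
qed


lemma pderiv_sum': "pderiv (sum f A) = (\<Sum>i\<in>A. pderiv (f i))"
  by (induction A rule: infinite_finite_induct) (auto simp: pderiv_add)

lemma poly_q_poly: "poly (q_poly q m b) x = (\<Sum>i\<le>m. b i * x ^ (q ^ i))"
  unfolding q_poly_def by (simp add: poly_sum poly_monom)

lemma coeff_q_poly_pow:
  assumes "q > 1" shows "coeff (q_poly q m b) (q ^ j) = (if j \<le> m then b j else 0)"
proof -
  have "coeff (q_poly q m b) (q ^ j) = (\<Sum>i\<le>m. if i = j then b i else 0)"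
    unfolding q_poly_def coeff_sum coeff_monom using assms by (intro sum.cong refl) auto
  also have "\<dots> = (if j \<le> m then b j else 0)" by (simp add: sum.delta)
  finally show ?thesis .
qed

lemma coeff_q_poly_other:
  assumes "\<forall>i\<le>m. k \<noteq> q ^ i" shows "coeff (q_poly q m b) k = 0"
  unfolding q_poly_def coeff_sum coeff_monom using assms by (intro sum.neutral) auto

lemma degree_q_poly_le: "q > 0 \<Longrightarrow> degree (q_poly q m b) \<le> q ^ m"
  unfolding q_poly_def
proof (intro degree_sum_le)
  fix i assume q: "q > 0" and i: "i \<in> {..m}"
  have "degree (monom (b i) (q ^ i)) \<le> q ^ i" by (rule degree_monom_le)
  also have "\<dots> \<le> q ^ m" using i q by (intro power_increasing) auto
  finally show "degree (monom (b i) (q ^ i)) \<le> q ^ m" .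
qed simp

lemma prod_lin_Cons: "(\<Prod>r\<leftarrow>r # rs. [:- r, 1:] :: 'e::field poly) = [:- r, 1:] * (\<Prod>r\<leftarrow>rs. [:- r, 1:])"
  by (simp only: list.map prod_list.Cons)

lemma prod_lin_nz: "(\<Prod>r\<leftarrow>rs. [:- r, 1:] :: 'e::field poly) \<noteq> 0"
proof (induction rs)
  case Nil then show ?case by simp
next
  case (Cons r rs)
  have "[:- r, 1:] \<noteq> (0 :: 'e poly)" by simp
  then show ?case unfolding prod_lin_Cons using Cons.IH by (metis no_zero_divisors)
qed

lemma Kpoly_q_poly: "is_subfield K \<Longrightarrow> (\<forall>i\<le>m. b i \<in> K) \<Longrightarrow> Kpoly K (q_poly q m b)"
  unfolding Kpoly_def q_poly_def coeff_sum coeff_monom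
  by (auto intro!: sf_sum sf_0)

lemma poly_prod_lin: "poly (\<Prod>r\<leftarrow>rs. [:- r, 1:] :: 'e::field poly) x = 0 \<longleftrightarrow> x \<in> set rs"
proof (induction rs)
  case Nil then show ?case by simp
next
  case (Cons r rs)
  have "poly (\<Prod>r\<leftarrow>r # rs. [:- r, 1:]) x = (x - r) * poly (\<Prod>r\<leftarrow>rs. [:- r, 1:]) x"
    unfolding prod_lin_Cons by (simp only: poly_mult) simp
  then show ?case using Cons.IH by simp
qed

lemma degree_prod_lin: "degree (\<Prod>r\<leftarrow>rs. [:- r, 1:] :: 'e::field poly) = length rs"
proof (induction rs)
  case Nil then show ?case by simp
next
  case (Cons r rs)
  have nz: "(\<Prod>r\<leftarrow>rs. [:- r, 1:] :: 'e poly) \<noteq> 0"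
    by (rule prod_lin_nz)
  have "degree (\<Prod>r\<leftarrow>r # rs. [:- r, 1:]) = degree [:- r, 1:] + degree (\<Prod>r\<leftarrow>rs. [:- r, 1:] :: 'e poly)"
    unfolding prod_lin_Cons by (rule degree_mult_eq) (use nz in simp_all)
  then show ?case using Cons.IH by simp
qed

lemma distinct_prod_lin:
  fixes rs :: "'e::field list"
  assumes "\<forall>x. order x (\<Prod>r\<leftarrow>rs. [:- r, 1:]) \<le> 1"
  shows "distinct rs"
  using assms
proof (induction rs)
  case Nil then show ?case by simp
next
  case (Cons r rs)
  have nz: "(\<Prod>r\<leftarrow>rs. [:- r, 1:] :: 'e poly) \<noteq> 0"
    by (rule prod_lin_nz)
  have o: "order x (\<Prod>r\<leftarrow>r # rs. [:- r, 1:]) = order x [:- r, 1:] + order x (\<Prod>r\<leftarrow>rs. [:- r, 1:])"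
    for x unfolding prod_lin_Cons by (rule order_mult) (use prod_lin_nz[of "r # rs"] in \<open>unfold prod_lin_Cons\<close>)
  have "\<forall>x. order x (\<Prod>r\<leftarrow>rs. [:- r, 1:]) \<le> 1"
  proof
    fix x
    have "order x (\<Prod>r\<leftarrow>r # rs. [:- r, 1:]) \<le> 1" using Cons.prems by blast
    thus "order x (\<Prod>r\<leftarrow>rs. [:- r, 1:]) \<le> 1" using o[of x] by linarith
  qed
  hence d: "distinct rs" by (rule Cons.IH)
  have "r \<notin> set rs"
  proof
    assume "r \<in> set rs"
    hence "poly (\<Prod>r\<leftarrow>rs. [:- r, 1:]) r = 0" using poly_prod_lin by blast
    hence "order r (\<Prod>r\<leftarrow>rs. [:- r, 1:]) \<noteq> 0" using nz order_root by blast
    hence "order r (\<Prod>r\<leftarrow>rs. [:- r, 1:]) \<ge> 1" by simp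
    moreover have "order r [:- r, 1:] = 1" using order_power_n_n[of r 1] by simp
    moreover have "order r (\<Prod>r\<leftarrow>r # rs. [:- r, 1:]) \<le> 1" using Cons.prems by blast
    ultimately show False using o[of r] by linarith
  qed
  thus ?case using d by simp
qed

locale S =
  fixes p q n :: nat and F :: "'e::field set" and a \<alpha> :: "nat \<Rightarrow> 'e"
  assumes p: "prime p"
    and qk: "\<exists>k\<ge>1. q = p ^ k"
    and ch: "CHAR('e) = p"
    and F: "is_subfield F"
    and FqF: "Fq q \<subseteq> F"
    and n1: "n \<ge> 1"
    and aF: "\<forall>i\<le>n. a i \<in> F"
    and an: "a n = 1"
    and a0: "a 0 \<noteq> 0"
    and spl: "is_splitting_field F (q_poly q n a)"
    and basis: "is_Fq_basis q {x. poly (q_poly q n a) x = 0} n \<alpha>"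
begin

abbreviation "L \<equiv> q_poly q n a"
abbreviation "V \<equiv> {x. poly L x = 0}"

lemma q_ppow: "ppow p q" using qk unfolding ppow_def by blast
lemma qj_ppow: "ppow p (q ^ j)" using ppow_power[OF q_ppow] .
lemma q_gt1: "q > 1"
proof -
  obtain k where k: "k \<ge> 1" "q = p ^ k" using qk by blast
  have "p > 1" using p prime_gt_1_nat by blast
  thus ?thesis using k one_less_power[of p k] by simp
qed

lemma L_coeff_top: "coeff L (q ^ n) = 1" using coeff_q_poly_pow[OF q_gt1, of n a n] an by simp
lemma L_degree: "degree L = q ^ n"
proof (rule antisym)
  show "degree L \<le> q ^ n" using degree_q_poly_le[of q n a] q_gt1 by simp
  show "q ^ n \<le> degree L" using L_coeff_top by (intro le_degree) simp
qed
lemma L_nz: "L \<noteq> 0" using L_coeff_top by auto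
lemma L_lead: "lead_coeff L = 1" using L_degree L_coeff_top by simp
lemma L_Kpoly: "Kpoly F L" using Kpoly_q_poly[OF F] aF by blast

lemma char_q: "(of_nat (q ^ i) :: 'e) = 0" if "i \<ge> 1"
proof -
  obtain k where k: "k \<ge> 1" "q = p ^ k" using qk by blast
  have "p dvd q" using k dvd_power[of k p] by simp
  moreover have "q dvd q ^ i" using that dvd_power[of i q] by simp
  ultimately have "p dvd q ^ i" by (rule dvd_trans)
  thus ?thesis using ch of_nat_eq_0_iff_char_dvd by metis
qed

lemma char_q1: "(of_nat q :: 'e) = 0" using char_q[of 1] by simp

lemma L_pderiv: "pderiv L = [:a 0:]"
proof -
  have "pderiv L = (\<Sum>i\<le>n. monom (of_nat (q ^ i) * a i) (q ^ i - 1))"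
    unfolding q_poly_def pderiv_sum' pderiv_monom ..
  also have "\<dots> = (\<Sum>i\<in>{0}. monom (of_nat (q ^ i) * a i) (q ^ i - 1))"
    by (rule sum.mono_neutral_right) (auto simp: char_q1 power_0_left)
  also have "\<dots> = [:a 0:]" by (simp add: monom_0)
  finally show ?thesis .
qed

lemma L_order: "order x L \<le> 1"
proof (rule ccontr)
  assume "\<not> order x L \<le> 1"
  hence "[:-x, 1:] ^ 2 dvd L" unfolding order_divides by simp
  then obtain g where g: "L = [:-x, 1:] ^ 2 * g" by (rule dvdE)
  define h where "h = [:-x, 1:]"
  have hx: "poly h x = 0" unfolding h_def by simp
  have Lh: "L = h * (h * g)" using g unfolding h_def by (simp only: power2_eq_square mult.assoc)
  have "pderiv L = h * pderiv (h * g) + (h * g) * pderiv h" unfolding Lh by (rule pderiv_mult)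
  hence "poly (pderiv L) x = poly h x * poly (pderiv (h * g)) x + (poly h x * poly g x) * poly (pderiv h) x"
    by (simp only: poly_add poly_mult)
  hence "poly (pderiv L) x = 0" unfolding hx by simp
  moreover have "poly (pderiv L) x = a 0" unfolding L_pderiv by simp
  ultimately show False using a0 by simp
qed

lemma card_V: "card V = q ^ n"
proof -
  obtain rs where rs: "L = smult (lead_coeff L) (\<Prod>r\<leftarrow>rs. [:- r, 1:])"
    using spl unfolding is_splitting_field_def splits_def by blast
  hence Lrs: "L = (\<Prod>r\<leftarrow>rs. [:- r, 1:])" unfolding L_lead smult_1_left .
  have Vrs: "V = set rs" by (subst Lrs) (simp only: poly_prod_lin Collect_mem_eq)
  have "distinct rs"
  proof (rule distinct_prod_lin, rule allI)
    fix x show "order x (\<Prod>r\<leftarrow>rs. [:- r, 1:]) \<le> 1"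
      unfolding Lrs[symmetric] by (rule L_order)
  qed
  hence "card (set rs) = length rs" by (rule distinct_card)
  moreover have "length rs = q ^ n" unfolding L_degree[symmetric] by (subst Lrs) (simp only: degree_prod_lin)
  ultimately show ?thesis unfolding Vrs by simp
qed

lemma finite_V: "finite V" using poly_roots_finite[OF L_nz] .

end


lemma crh:
  fixes f :: "'e::field \<Rightarrow> 'e"
  assumes add: "\<And>x y. f (x + y) = f x + f y" and mult: "\<And>x y. f (x * y) = f x * f y" and one: "f 1 = 1"
  shows "comm_ring_hom f"
proof -
  have z: "f 0 = 0"
  proof -
    have "f (0 + 0) = f 0 + f 0" by (rule add)
    hence "f 0 + f 0 = f 0 + 0" by simp
    thus ?thesis by (rule add_left_imp_eq)
  qed
  show ?thesis by unfold_locales (use add mult one z in auto)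
qed

context S
begin

lemma Fq_0: "(0::'e) \<in> Fq q" unfolding Fq_def using q_gt1 by simp
lemma Fq_1: "(1::'e) \<in> Fq q" unfolding Fq_def by simp
lemma Fq_add: "(x::'e) \<in> Fq q \<Longrightarrow> y \<in> Fq q \<Longrightarrow> x + y \<in> Fq q"
  unfolding Fq_def using frob_add[OF p ch q_ppow, of x y] by simp
lemma Fq_diff: "(x::'e) \<in> Fq q \<Longrightarrow> y \<in> Fq q \<Longrightarrow> x - y \<in> Fq q"
  unfolding Fq_def using frob_diff[OF p ch q_ppow, of x y] by simp
lemma Fq_mult: "(x::'e) \<in> Fq q \<Longrightarrow> y \<in> Fq q \<Longrightarrow> x * y \<in> Fq q"
  unfolding Fq_def by (simp add: power_mult_distrib)

lemma qlin:
  fixes d x :: "'i \<Rightarrow> 'e"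
  assumes "\<And>i. i \<in> I \<Longrightarrow> d i \<in> Fq q"
  shows "(\<Sum>i\<in>I. d i * x i) ^ (q ^ j) = (\<Sum>i\<in>I. d i * x i ^ (q ^ j))"
proof -
  have "(\<Sum>i\<in>I. d i * x i) ^ (q ^ j) = (\<Sum>i\<in>I. (d i * x i) ^ (q ^ j))"
    using frob_sum[OF p ch qj_ppow, of "\<lambda>i. d i * x i" I j] by simp
  also have "\<dots> = (\<Sum>i\<in>I. d i * x i ^ (q ^ j))"
    by (intro sum.cong refl) (simp add: power_mult_distrib Fq_power assms)
  finally show ?thesis .
qed

lemma basis_in: "i < n \<Longrightarrow> \<alpha> i \<in> V" using basis unfolding is_Fq_basis_def by blast
lemma basis_span: "v \<in> V \<Longrightarrow> \<exists>c. (\<forall>i<n. c i \<in> Fq q) \<and> v = (\<Sum>i<n. c i * \<alpha> i)"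
  using basis unfolding is_Fq_basis_def by blast

lemma finite_Fq: "finite (Fq q :: 'e set)"
proof -
  let ?g = "monom 1 q - [:0, 1:] :: 'e poly"
  have "coeff ?g q = 1" using q_gt1 by (simp add: coeff_pCons split: nat.split)
  have g0: "?g \<noteq> 0"
  proof
    assume "?g = 0"
    hence "coeff ?g q = coeff 0 q" by (simp only:)
    thus False using \<open>coeff ?g q = 1\<close> by simp
  qed
  have sub: "Fq q \<subseteq> {x. poly ?g x = 0}" unfolding Fq_def by (auto simp: poly_monom)
  show ?thesis by (rule finite_subset[OF sub poly_roots_finite[OF g0]])
qed

lemma card_Fq: "card (Fq q :: 'e set) \<ge> q"
proof -
  let ?P = "PiE {..<n} (\<lambda>_. Fq q :: 'e set)"
  let ?\<Phi> = "\<lambda>c. \<Sum>i<n. c i * \<alpha> i"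
  have "V \<subseteq> ?\<Phi> ` ?P"
  proof
    fix v assume "v \<in> V"
    then obtain c where c: "\<forall>i<n. c i \<in> Fq q" "v = (\<Sum>i<n. c i * \<alpha> i)" using basis_span by blast
    have r: "restrict c {..<n} \<in> ?P" using c(1) by auto
    have e: "v = ?\<Phi> (restrict c {..<n})" using c(2) by simp
    show "v \<in> ?\<Phi> ` ?P" using e r by (rule image_eqI)
  qed
  moreover have finP: "finite ?P" by (rule finite_PiE) (auto simp: finite_Fq)
  ultimately have "card V \<le> card (?\<Phi> ` ?P)" by (intro card_mono finite_imageI)
  also have "\<dots> \<le> card ?P" by (rule card_image_le[OF finP])
  also have "\<dots> = card (Fq q :: 'e set) ^ n" by (simp add: card_PiE)
  finally have "q ^ n \<le> card (Fq q :: 'e set) ^ n" using card_V by simp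
  hence "q ^ Suc (n - 1) \<le> card (Fq q :: 'e set) ^ Suc (n - 1)" using n1 by simp
  thus ?thesis by (rule power_le_imp_le_base) simp
qed

abbreviation "M \<equiv> mat n n (\<lambda>(i, j). \<alpha> i ^ (q ^ j))"
abbreviation "\<delta> \<equiv> det M"

lemma M_carrier: "M \<in> carrier_mat n n" by simp

lemma delta_nz: "\<delta> \<noteq> 0"
proof
  assume "\<delta> = 0"
  then obtain v where v: "v \<in> carrier_vec n" "v \<noteq> 0\<^sub>v n" "M *\<^sub>v v = 0\<^sub>v n"
    using det_0_iff_vec_prod_zero_field[OF M_carrier] by blast
  have rows: "(\<Sum>j<n. v $ j * \<alpha> i ^ (q ^ j)) = 0" if i: "i < n" for i
  proof -
    have "(M *\<^sub>v v) $ i = 0" using v(3) i by simp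
    moreover have "(M *\<^sub>v v) $ i = (\<Sum>j\<in>{0..<n}. \<alpha> i ^ (q ^ j) * v $ j)"
      using i v(1) by (simp add: scalar_prod_def)
    ultimately show ?thesis by (simp add: atLeast0LessThan mult.commute)
  qed
  have "\<exists>j<n. v $ j \<noteq> 0"
  proof (rule ccontr)
    assume "\<not> (\<exists>j<n. v $ j \<noteq> 0)"
    hence "v = 0\<^sub>v n" using v(1) by (intro eq_vecI) auto
    thus False using v(2) by simp
  qed
  then obtain j0 where j0: "j0 < n" "v $ j0 \<noteq> 0" by blast
  define Pm where "Pm = q_poly q (n - 1) (\<lambda>j. v $ j)"
  have lessn: "{..n - 1} = {..<n}" using n1 by auto
  have "j0 \<le> n - 1" using j0(1) by simp
  hence "coeff Pm (q ^ j0) = v $ j0" unfolding Pm_def using coeff_q_poly_pow[OF q_gt1, of "n - 1" _ j0] by simp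
  hence Pm0: "Pm \<noteq> 0" using j0(2) by auto
  have "V \<subseteq> {x. poly Pm x = 0}"
  proof
    fix x assume "x \<in> V"
    then obtain d where d: "\<forall>i<n. d i \<in> Fq q" "x = (\<Sum>i<n. d i * \<alpha> i)" using basis_span by blast
    have "poly Pm x = (\<Sum>j<n. v $ j * x ^ (q ^ j))" unfolding Pm_def poly_q_poly lessn ..
    also have "\<dots> = (\<Sum>j<n. v $ j * (\<Sum>i<n. d i * \<alpha> i ^ (q ^ j)))"
    proof -
      have dF: "\<And>i. i \<in> {..<n} \<Longrightarrow> d i \<in> Fq q" using d(1) by auto
      show ?thesis unfolding d(2) by (intro sum.cong refl) (simp only: qlin[OF dF])
    qed
    also have "\<dots> = (\<Sum>j<n. \<Sum>i<n. d i * (v $ j * \<alpha> i ^ (q ^ j)))"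
      by (intro sum.cong refl) (simp add: sum_distrib_left mult.left_commute)
    also have "\<dots> = (\<Sum>i<n. \<Sum>j<n. d i * (v $ j * \<alpha> i ^ (q ^ j)))"
      by (rule sum.swap)
    also have "\<dots> = (\<Sum>i<n. d i * (\<Sum>j<n. v $ j * \<alpha> i ^ (q ^ j)))"
      by (simp add: sum_distrib_left)
    also have "\<dots> = 0" using rows by simp
    finally show "x \<in> {x. poly Pm x = 0}" by simp
  qed
  hence "card V \<le> card {x. poly Pm x = 0}" by (intro card_mono poly_roots_finite Pm0)
  also have "\<dots> \<le> degree Pm" by (rule card_poly_roots_bound[OF Pm0])
  also have "\<dots> \<le> q ^ (n - 1)" unfolding Pm_def using q_gt1 by (intro degree_q_poly_le) simp
  also have "\<dots> < q ^ n" using n1 q_gt1 by (intro power_strict_increasing) auto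
  finally show False using card_V by simp
qed

lemma map_L: "hom_on UNIV \<sigma> \<Longrightarrow> (\<forall>x\<in>F. \<sigma> x = x) \<Longrightarrow> map_poly \<sigma> L = L"
  by (rule poly_eqI) (use L_Kpoly in \<open>simp add: coeff_tm[OF subfield_UNIV] Kpoly_def\<close>)

lemma sigma_V:
  assumes "\<sigma> \<in> Gal F" "x \<in> V" shows "\<sigma> x \<in> V"
proof -
  have H: "hom_on UNIV \<sigma>" using Gal_hom[OF assms(1)] .
  have fx: "\<forall>x\<in>F. \<sigma> x = x" using assms(1) unfolding Gal_def by blast
  have "\<sigma> (poly L x) = poly (map_poly \<sigma> L) (\<sigma> x)"
    using hom_poly[OF subfield_UNIV H] L_Kpoly unfolding Kpoly_def by simp
  thus ?thesis using assms(2) map_L[OF H fx] hom_zero[OF subfield_UNIV H] by simp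
qed

lemma Gal_crh: "\<sigma> \<in> Gal F \<Longrightarrow> comm_ring_hom \<sigma>"
  unfolding Gal_def by (intro crh) auto

lemma sigma_delta:
  assumes \<sigma>: "\<sigma> \<in> Gal F" and C: "\<forall>i<n. \<forall>j<n. C i j \<in> Fq q"
    and act: "\<forall>i<n. \<sigma> (\<alpha> i) = (\<Sum>j<n. C i j * \<alpha> j)"
  shows "\<sigma> \<delta> = det (mat n n (\<lambda>(i, j). C i j)) * \<delta>"
proof -
  interpret h: comm_ring_hom \<sigma> using Gal_crh[OF \<sigma>] .
  let ?C = "mat n n (\<lambda>(i, j). C i j)"
  have "map_mat \<sigma> M = ?C * M"
  proof (rule eq_matI)
    fix i j assume i: "i < dim_row (?C * M)" and j: "j < dim_col (?C * M)"
    hence i: "i < n" and j: "j < n" by auto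
    have "map_mat \<sigma> M $$ (i, j) = \<sigma> (\<alpha> i) ^ (q ^ j)" using i j by (simp add: h.hom_power)
    also have "\<dots> = (\<Sum>k<n. C i k * \<alpha> k ^ (q ^ j))" unfolding act[rule_format, OF i]
      by (rule qlin) (use C i in auto)
    also have "\<dots> = (?C * M) $$ (i, j)" using i j
      by (simp add: scalar_prod_def atLeast0LessThan)
    finally show "map_mat \<sigma> M $$ (i, j) = (?C * M) $$ (i, j)" .
  qed auto
  hence "\<sigma> \<delta> = det (?C * M)" using h.hom_det[of M] by simp
  also have "\<dots> = det ?C * \<delta>" by (rule det_mult) auto
  finally show ?thesis .
qed

end


context S
begin

abbreviation "T \<equiv> mat n n (\<lambda>(k, j). if Suc j < n then (if k = Suc j then (1::'e) else 0) else - a k)"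

lemma T_entry_F: "i < n \<Longrightarrow> j < n \<Longrightarrow> T $$ (i, j) \<in> F"
  using sf_0[OF F] sf_1[OF F] sf_uminus[OF F] aF by auto

lemma detT_F: "det T \<in> F"
proof -
  have "det T = (\<Sum>p\<in>{p. p permutes {0..<n}}. signof p * (\<Prod>i = 0..<n. T $$ (i, p i)))"
    by (rule det_def') simp
  also have "\<dots> \<in> F"
  proof (rule sf_sum[OF F])
    fix p assume "p \<in> {p. p permutes {0..<n}}"
    hence pp: "p permutes {0..<n}" by simp
    have "(\<Prod>i = 0..<n. T $$ (i, p i)) \<in> F"
    proof (rule sf_prod[OF F])
      fix i assume i: "i \<in> {0..<n}"
      hence "p i \<in> {0..<n}" using permutes_in_image[OF pp] by simp
      thus "T $$ (i, p i) \<in> F" using i T_entry_F by simp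
    qed
    thus "signof p * (\<Prod>i = 0..<n. T $$ (i, p i)) \<in> F"
      by (intro sf_mult[OF F] sf_of_int[OF F])
  qed
  finally show ?thesis .
qed

lemma frob_crh: "comm_ring_hom (\<lambda>x::'e. x ^ q)"
  by (rule crh) (simp_all add: frob_add[OF p ch q_ppow] power_mult_distrib)

lemma L_root_top: "i < n \<Longrightarrow> (\<Sum>k<n. \<alpha> i ^ (q ^ k) * (- a k)) = \<alpha> i ^ (q ^ n)"
proof -
  assume i: "i < n"
  have "poly L (\<alpha> i) = 0" using basis_in[OF i] by simp
  hence "(\<Sum>k\<le>n. a k * \<alpha> i ^ (q ^ k)) = 0" unfolding poly_q_poly .
  hence "(\<Sum>k<Suc n. a k * \<alpha> i ^ (q ^ k)) = 0" by (simp only: lessThan_Suc_atMost)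
  hence "(\<Sum>k<n. a k * \<alpha> i ^ (q ^ k)) + \<alpha> i ^ (q ^ n) = 0" using an by simp
  hence "(\<Sum>k<n. a k * \<alpha> i ^ (q ^ k)) = - (\<alpha> i ^ (q ^ n))" by (simp add: eq_neg_iff_add_eq_0)
  moreover have "(\<Sum>k<n. \<alpha> i ^ (q ^ k) * (- a k)) = - (\<Sum>k<n. a k * \<alpha> i ^ (q ^ k))"
    by (simp add: sum_negf mult.commute)
  ultimately show ?thesis by simp
qed

lemma MT: "map_mat (\<lambda>x. x ^ q) M = M * T"
proof (rule eq_matI)
  fix i j assume "i < dim_row (M * T)" "j < dim_col (M * T)"
  hence i: "i < n" and j: "j < n" by auto
  have lhs: "map_mat (\<lambda>x. x ^ q) M $$ (i, j) = \<alpha> i ^ (q ^ Suc j)"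
    using i j by (simp add: power_mult[symmetric] mult.commute)
  have rhs: "(M * T) $$ (i, j) = (\<Sum>k\<in>{0..<n}. \<alpha> i ^ (q ^ k) * T $$ (k, j))"
    using i j by (simp add: scalar_prod_def)
  show "map_mat (\<lambda>x. x ^ q) M $$ (i, j) = (M * T) $$ (i, j)"
  proof (cases "Suc j < n")
    case True
    have "(\<Sum>k\<in>{0..<n}. \<alpha> i ^ (q ^ k) * T $$ (k, j)) =
          (\<Sum>k\<in>{0..<n}. if k = Suc j then \<alpha> i ^ (q ^ k) else 0)"
      by (intro sum.cong refl) (use True j in auto)
    also have "\<dots> = \<alpha> i ^ (q ^ Suc j)" using True by (simp add: sum.delta)
    finally show ?thesis using lhs rhs by simp
  next
    case False
    hence jn: "Suc j = n" using j by simp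
    have "(\<Sum>k\<in>{0..<n}. \<alpha> i ^ (q ^ k) * T $$ (k, j)) = (\<Sum>k<n. \<alpha> i ^ (q ^ k) * (- a k))"
      unfolding atLeast0LessThan by (intro sum.cong refl) (use False j in auto)
    also have "\<dots> = \<alpha> i ^ (q ^ n)" by (rule L_root_top[OF i])
    finally show ?thesis using lhs rhs jn by simp
  qed
qed auto

lemma delta_pow: "\<delta> ^ q = \<delta> * det T"
proof -
  have "\<delta> ^ q = det (map_mat (\<lambda>x. x ^ q) M)"
    using comm_ring_hom.hom_det[OF frob_crh, of M] by simp
  also have "\<dots> = det (M * T)" unfolding MT ..
  also have "\<dots> = \<delta> * det T" by (rule det_mult) auto
  finally show ?thesis .
qed

end


context S
begin

lemma hom_id: "hom_on K id" unfolding hom_on_def by simp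

abbreviation "G0 \<equiv> monom 1 q - smult (det T) [:0, 1:]"

lemma G0_K: "Kpoly F G0"
proof -
  have "Kpoly F (monom 1 q)" by (rule Kpoly_monom[OF F sf_1[OF F]])
  moreover have "Kpoly F (smult (det T) [:0, 1:])" by (rule Kpoly_smult[OF F detT_F Kpoly_X[OF F]])
  ultimately show ?thesis by (rule Kpoly_diff[OF F])
qed

lemma G0_coeff: "coeff G0 q = 1"
proof -
  have "coeff (monom (1::'e) q) q = 1" by simp
  moreover have "coeff (smult (det T) [:0, 1::'e:]) q = 0" using q_gt1
    by (simp add: coeff_pCons split: nat.split)
  ultimately show ?thesis by (simp only: coeff_diff) simp
qed

lemma G0_nz: "G0 \<noteq> 0"
proof
  assume "G0 = 0"
  hence "coeff G0 q = coeff 0 q" by (simp only:)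
  thus False using G0_coeff by simp
qed

lemma G0_deg: "degree G0 = q"
proof (rule antisym)
  have a: "degree (monom (1::'e) q) \<le> q" by (rule degree_monom_le)
  have "degree (smult (det T) [:0, 1::'e:]) \<le> degree [:0, 1::'e:]" by (rule degree_smult_le)
  also have "\<dots> \<le> q" using q_gt1 by simp
  finally have b: "degree (smult (det T) [:0, 1::'e:]) \<le> q" .
  show "degree G0 \<le> q" by (rule degree_diff_le[OF a b])
  show "q \<le> degree G0" using G0_coeff by (intro le_degree) simp
qed

lemma G0_poly: "poly G0 y = y ^ q - det T * y"
  by (simp add: poly_monom)

lemma moves:
  assumes nF: "\<delta> \<notin> F"
  shows "\<exists>\<sigma>\<in>Gal F. \<sigma> \<delta> \<noteq> \<delta>"
proof -
  define c where "c = det T"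
  have cF: "c \<in> F" unfolding c_def by (rule detT_F)
  have dq: "\<delta> ^ q = \<delta> * c" unfolding c_def by (rule delta_pow)
  have d0: "\<delta> \<noteq> 0" by (rule delta_nz)
  define g0 where "g0 = G0"
  have g0K: "Kpoly F g0" unfolding g0_def by (rule G0_K)
  have g0nz: "g0 \<noteq> 0" unfolding g0_def by (rule G0_nz)
  have dg0: "degree g0 = q" unfolding g0_def by (rule G0_deg)
  have pg0: "poly g0 y = y ^ q - c * y" for y unfolding g0_def c_def by (rule G0_poly)
  have rootd: "poly g0 \<delta> = 0" unfolding pg0 dq by simp
  obtain m where mp: "minpoly_for F \<delta> m" using minpoly_exists[OF F g0K g0nz rootd] by blast
  have m: "Kpoly F m" "lead_coeff m = 1" "poly m \<delta> = 0"
    using mp unfolding minpoly_for_def[OF F] by auto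
  have m4: "degree m \<ge> 1" by (rule minpoly_degree[OF F mp])
  obtain h where h: "Kpoly F h" "g0 = m * h" using minpoly_dvd[OF F mp g0K rootd] by blast
  have m0: "m \<noteq> 0" using m(2) by auto
  have h0: "h \<noteq> 0"
  proof
    assume "h = 0"
    hence "g0 = 0" using h(2) by simp
    thus False using g0nz by simp
  qed
  have dm2: "degree m \<ge> 2"
  proof (rule ccontr)
    assume "\<not> degree m \<ge> 2"
    hence dm1: "degree m = 1" using m4 by simp
    have "poly m \<delta> = (\<Sum>i\<le>1. coeff m i * \<delta> ^ i)" unfolding poly_altdef dm1 ..
    also have "\<dots> = coeff m 0 + coeff m 1 * \<delta>" by simp
    also have "coeff m 1 = 1" using m(2) dm1 by simp
    finally have "coeff m 0 + \<delta> = 0" using m(3) by simp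
    hence "\<delta> = - coeff m 0" by (simp add: eq_neg_iff_add_eq_0 add.commute)
    moreover have "- coeff m 0 \<in> F" by (rule sf_uminus[OF F Kpoly_coeff[OF F m(1)]])
    ultimately show False using nF by simp
  qed
  have "\<exists>s. poly m s = 0 \<and> s \<noteq> \<delta>"
  proof (rule ccontr)
    assume ns: "\<not> (\<exists>s. poly m s = 0 \<and> s \<noteq> \<delta>)"
    define Z where "Z = (\<lambda>\<zeta>. \<zeta> * \<delta>) ` (Fq q :: 'e set)"
    have injZ: "inj_on (\<lambda>\<zeta>. \<zeta> * \<delta>) (Fq q)" using d0 by (intro inj_onI) simp
    have cZ: "card Z \<ge> q" unfolding Z_def using card_Fq card_image[OF injZ] by simp
    have finZ: "finite Z" unfolding Z_def using finite_Fq by simp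
    have "Z - {\<delta>} \<subseteq> {x. poly h x = 0}"
    proof
      fix z assume z: "z \<in> Z - {\<delta>}"
      then obtain \<zeta> where \<zeta>: "\<zeta> \<in> Fq q" "z = \<zeta> * \<delta>" unfolding Z_def by blast
      have "\<zeta> ^ q = \<zeta>" using \<zeta>(1) unfolding Fq_def by simp
      hence "poly g0 z = 0" unfolding pg0 \<zeta>(2) by (simp add: power_mult_distrib dq)
      hence "poly m z * poly h z = 0" unfolding h(2) poly_mult .
      moreover have "poly m z \<noteq> 0" using ns z by blast
      ultimately show "z \<in> {x. poly h x = 0}" by simp
    qed
    hence "card (Z - {\<delta>}) \<le> card {x. poly h x = 0}" by (intro card_mono poly_roots_finite h0)
    also have "\<dots> \<le> degree h" by (rule card_poly_roots_bound[OF h0])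
    finally have c1: "card (Z - {\<delta>}) \<le> degree h" .
    have "card Z \<le> card (Z - {\<delta>}) + 1"
    proof (cases "\<delta> \<in> Z")
      case True then show ?thesis using card_Suc_Diff1[OF finZ True] by simp
    next
      case False then show ?thesis by simp
    qed
    moreover have "degree g0 = degree m + degree h" unfolding h(2) using m0 h0 by (rule degree_mult_eq)
    ultimately show False using c1 cZ dg0 dm2 by linarith
  qed
  then obtain s where s: "poly m s = 0" "s \<noteq> \<delta>" by blast
  have mid: "poly (map_poly id m) s = 0" using s(1) by simp
  have "\<exists>K' \<tau>'. is_subfield K' \<and> F \<subseteq> K' \<and> \<delta> \<in> K' \<and> hom_on K' \<tau>' \<and>
     (\<forall>x\<in>F. \<tau>' x = id x) \<and> \<tau>' \<delta> = s"
    by (rule adjoin_ext[OF F hom_id mp mid])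
  then obtain K' \<tau>' where ext: "is_subfield K'" "F \<subseteq> K'" "\<delta> \<in> K'" "hom_on K' \<tau>'"
      "\<forall>x\<in>F. \<tau>' x = id x" "\<tau>' \<delta> = s"
    by blast
  have fixK: "\<forall>x\<in>F. \<tau>' x = x" using ext(5) by simp
  have cardV': "card V = degree L" using card_V L_degree by simp
  obtain \<sigma> where \<sigma>: "\<sigma> \<in> Gal F" "\<forall>x\<in>K'. \<sigma> x = \<tau>' x"
    using IET[OF F L_Kpoly L_nz spl cardV' ext(1,2,4) fixK] by blast
  have "\<sigma> \<delta> = s" using \<sigma>(2) ext(3,6) by simp
  thus ?thesis using \<sigma>(1) s(2) by blast
qed

lemma main_iff: "(\<forall>\<sigma>\<in>Gal F. acts_in_SL q n \<alpha> \<sigma>) \<longleftrightarrow> \<delta> \<in> F"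
proof
  assume all: "\<forall>\<sigma>\<in>Gal F. acts_in_SL q n \<alpha> \<sigma>"
  show "\<delta> \<in> F"
  proof (rule ccontr)
    assume "\<delta> \<notin> F"
    then obtain \<sigma> where \<sigma>: "\<sigma> \<in> Gal F" "\<sigma> \<delta> \<noteq> \<delta>" using moves by blast
    then obtain C where C: "\<forall>i<n. \<forall>j<n. C i j \<in> Fq q" "\<forall>i<n. \<sigma> (\<alpha> i) = (\<Sum>j<n. C i j * \<alpha> j)"
        "det (mat n n (\<lambda>(i, j). C i j)) = 1"
      using all unfolding acts_in_SL_def by blast
    have "\<sigma> \<delta> = \<delta>" using sigma_delta[OF \<sigma>(1) C(1,2)] C(3) by simp
    thus False using \<sigma>(2) by simp
  qed
next
  assume dF: "\<delta> \<in> F"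
  show "\<forall>\<sigma>\<in>Gal F. acts_in_SL q n \<alpha> \<sigma>"
  proof
    fix \<sigma> assume \<sigma>: "\<sigma> \<in> Gal F"
    let ?P = "\<lambda>i c. (\<forall>j<n. c j \<in> Fq q) \<and> \<sigma> (\<alpha> i) = (\<Sum>j<n. c j * \<alpha> j)"
    define C where "C i = (SOME c. ?P i c)" for i
    have CP: "?P i (C i)" if i: "i < n" for i
    proof -
      have "\<sigma> (\<alpha> i) \<in> V" using sigma_V[OF \<sigma> basis_in[OF i]] .
      hence "\<exists>c. ?P i c" using basis_span by blast
      thus ?thesis unfolding C_def by (rule someI_ex)
    qed
    have C1: "\<forall>i<n. \<forall>j<n. C i j \<in> Fq q" using CP by blast
    have C2: "\<forall>i<n. \<sigma> (\<alpha> i) = (\<Sum>j<n. C i j * \<alpha> j)" using CP by blast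
    have "\<sigma> \<delta> = \<delta>" using \<sigma> dF unfolding Gal_def by blast
    hence "det (mat n n (\<lambda>(i, j). C i j)) * \<delta> = 1 * \<delta>" using sigma_delta[OF \<sigma> C1 C2] by simp
    hence "det (mat n n (\<lambda>(i, j). C i j)) = 1" using delta_nz by simp
    thus "acts_in_SL q n \<alpha> \<sigma>" unfolding acts_in_SL_def using C1 C2 by blast
  qed
qed

end

theorem corollary2p3:
  fixes p q n :: nat and F :: "'e::field set" and a :: "nat \<Rightarrow> 'e" and \<alpha> :: "nat \<Rightarrow> 'e"
  assumes "prime p"
    and "\<exists>k\<ge>1. q = p ^ k"
    and "CHAR('e) = p"
    and "is_subfield F"
    and "Fq q \<subseteq> F"
    and "n \<ge> 1"
    and "\<forall>i\<le>n. a i \<in> F"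
    and "a n = 1"
    and "a 0 \<noteq> 0"
    and "is_splitting_field F (q_poly q n a)"
    and "is_Fq_basis q {x. poly (q_poly q n a) x = 0} n \<alpha>"
  shows "(\<forall>\<sigma>\<in>Gal F. acts_in_SL q n \<alpha> \<sigma>) \<longleftrightarrow>
         det (mat n n (\<lambda>(i, j). \<alpha> i ^ (q ^ j))) \<in> F"
proof -
  interpret S p q n F a \<alpha> using assms by unfold_locales
  show ?thesis by (rule main_iff)
qed


end
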